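(* Let $R$ be a commutative Noetherian ring, $n$ a non-negative integer and $L$ an $R$-module with $\dim L\ge n$. If $L'$ is a submodule of $L$ with $\dim L/L'\ge n$, then $$\bigcap_{\mathfrak p\in(\operatorname{Ass}_R L)_{\ge n}}\mathfrak p\ \subseteq\ \bigcap_{\mathfrak p\in(\operatorname{Ass}_R L/L')_{\ge n}}\mathfrak p.$$
   Context: For an $R$-module $L$, $\dim L=\sup\{\dim R/\mathfrak p:\mathfrak p\in\operatorname{Supp}L\}$. For a subset $T\subseteq\operatorname{Spec}R$, $(T)_{\ge n}=\{\mathfrak p\in T:\dim R/\mathfrak p\ge n\}$. *)

theory Defs
  imports "HOL-Algebra.Algebra" "HOL-Library.Extended_Nat"
begin

text \<open>Krull dimension of a ring: supremum of lengths k of chains of prime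
  ideals P0 < P1 < ... < Pk (value in enat; a ring with no primes gets 0).\<close>
definition krull_dim :: "('r, 'm) ring_scheme \<Rightarrow> enat" where
  "krull_dim S = Sup {enat k | k. \<exists>c :: nat \<Rightarrow> 'r set.
      (\<forall>i\<le>k. primeideal (c i) S) \<and> (\<forall>i<k. c i \<subset> c (Suc i))}"

definition dim_quot :: "('a, 'm) ring_scheme \<Rightarrow> 'a set \<Rightarrow> enat" where
  "dim_quot R p = krull_dim (R Quot p)"

text \<open>We work with the quotient module M/N through representatives:
  the class of x in M/N is zero iff x \<in> N.  Annihilator of the class of x:\<close>
definition ann_quot :: "('a, 'c) ring_scheme \<Rightarrow> ('a, 'b, 'd) module_scheme \<Rightarrow> 'b set \<Rightarrow> 'b \<Rightarrow> 'a set" where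
  "ann_quot R M N x = {r \<in> carrier R. r \<odot>\<^bsub>M\<^esub> x \<in> N}"

definition Ass_quot :: "('a, 'c) ring_scheme \<Rightarrow> ('a, 'b, 'd) module_scheme \<Rightarrow> 'b set \<Rightarrow> 'a set set" where
  "Ass_quot R M N = {p. primeideal p R \<and> (\<exists>x \<in> carrier M. p = ann_quot R M N x)}"

text \<open>Supp(M/N): primes p with (M/N)_p \<noteq> 0, i.e. some element x/1 of the
  localization is nonzero: no s \<notin> p kills the class of x.\<close>
definition Supp_quot :: "('a, 'c) ring_scheme \<Rightarrow> ('a, 'b, 'd) module_scheme \<Rightarrow> 'b set \<Rightarrow> 'a set set" where
  "Supp_quot R M N = {p. primeideal p R \<and>
      (\<exists>x \<in> carrier M. \<forall>s \<in> carrier R - p. s \<odot>\<^bsub>M\<^esub> x \<notin> N)}"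

definition Ass :: "('a, 'c) ring_scheme \<Rightarrow> ('a, 'b, 'd) module_scheme \<Rightarrow> 'a set set" where
  "Ass R M = Ass_quot R M {\<zero>\<^bsub>M\<^esub>}"

definition Supp :: "('a, 'c) ring_scheme \<Rightarrow> ('a, 'b, 'd) module_scheme \<Rightarrow> 'a set set" where
  "Supp R M = Supp_quot R M {\<zero>\<^bsub>M\<^esub>}"

definition dim_quot_mod :: "('a, 'c) ring_scheme \<Rightarrow> ('a, 'b, 'd) module_scheme \<Rightarrow> 'b set \<Rightarrow> enat" where
  "dim_quot_mod R M N = Sup (dim_quot R ` Supp_quot R M N)"

definition dim_mod :: "('a, 'c) ring_scheme \<Rightarrow> ('a, 'b, 'd) module_scheme \<Rightarrow> enat" where
  "dim_mod R M = dim_quot_mod R M {\<zero>\<^bsub>M\<^esub>}"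

definition ge_dim :: "('a, 'c) ring_scheme \<Rightarrow> 'a set set \<Rightarrow> nat \<Rightarrow> 'a set set" where
  "ge_dim R T n = {p \<in> T. enat n \<le> dim_quot R p}"

end

theory Submission imports Defs begin

lemma quot_carrier_E:
  assumes "x \<in> carrier (R Quot I)"
  obtains r where "r \<in> carrier R" "x = I +>\<^bsub>R\<^esub> r"
  using assms unfolding FactRing_def A_RCOSETS_def' by auto

lemma prime_transfer:
  fixes R (structure)
  assumes cr: "cring R" and ip: "ideal p R" and iq: "ideal q R" and pq: "p \<subseteq> q"
    and C: "primeideal C (R Quot q)"
  shows "primeideal ((+>) p ` {r \<in> carrier R. q +> r \<in> C}) (R Quot p)"
    and "\<Union> ((+>) p ` {r \<in> carrier R. q +> r \<in> C}) = {r \<in> carrier R. q +> r \<in> C}"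
proof -
  interpret cring R by (rule cr)
  define U where "U = {r \<in> carrier R. q +> r \<in> C}"
  have hq: "ring_hom_ring R (R Quot q) ((+>) q)" by (rule ideal.rcos_ring_hom_ring[OF iq])
  have hp: "ring_hom_ring R (R Quot p) ((+>) p)" by (rule ideal.rcos_ring_hom_ring[OF ip])
  have iC: "ideal C (R Quot q)" using C primeideal.axioms(1) by blast
  have iU: "ideal U R" unfolding U_def by (rule ring_hom_ring.ideal_vimage[OF hq iC])
  have pU: "p \<subseteq> U"
  proof
    fix r assume r: "r \<in> p"
    then have "r \<in> q" "r \<in> carrier R" using pq ideal.Icarr[OF ip] by auto
    then have "q +> r = q"
      by (meson a_coset_join2 additive_subgroup.a_subgroup ideal.axioms(1) iq)
    moreover have "q \<in> C" using additive_subgroup.zero_closed[OF ideal.axioms(1)[OF iC]]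
      by (simp add: FactRing_def)
    ultimately show "r \<in> U" unfolding U_def using \<open>r \<in> carrier R\<close> by simp
  qed
  have UnU: "\<Union> ((+>) p ` U) = U"
    using ideal_incl_iff[OF ip iU] pU by blast
  then show "\<Union> ((+>) p ` {r \<in> carrier R. q +> r \<in> C}) = {r \<in> carrier R. q +> r \<in> C}"
    unfolding U_def .
  have iD: "ideal ((+>) p ` U) (R Quot p)" by (rule ring_ideal_imp_quot_ideal[OF ip iU])
  have crp: "cring (R Quot p)" by (rule ideal.quotient_is_cring[OF ip cr])
  have Dsub: "(+>) p ` U \<subseteq> carrier (R Quot p)"
    using iD additive_subgroup.a_subset ideal.axioms(1) by blast
  have memD: "p +> a \<in> (+>) p ` U \<longleftrightarrow> a \<in> U" if "a \<in> carrier R" for a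
    using canonical_proj_vimage_mem_iff[OF ip Dsub that] UnU by simp
  have Cnc: "\<one>\<^bsub>R Quot q\<^esub> \<notin> C"
    using C ideal.one_imp_carrier[OF iC] primeideal.I_notcarr by metis
  show "primeideal ((+>) p ` U) (R Quot p)"
  proof (rule primeidealI[OF iD crp])
    show "carrier (R Quot p) \<noteq> (+>) p ` U"
    proof
      assume "carrier (R Quot p) = (+>) p ` U"
      then have "p +> \<one> \<in> (+>) p ` U"
        using ring_hom_ring.homh[OF hp] ring_hom_closed by (metis one_closed)
      then have "\<one> \<in> U" using memD by simp
      then have "q +> \<one> \<in> C" unfolding U_def by simp
      then show False using Cnc by (simp add: FactRing_def)
    qed
  next
    fix a b assume a: "a \<in> carrier (R Quot p)" and b: "b \<in> carrier (R Quot p)"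
      and ab: "a \<otimes>\<^bsub>R Quot p\<^esub> b \<in> (+>) p ` U"
    obtain a' where a': "a' \<in> carrier R" "a = p +> a'" using a quot_carrier_E by metis
    obtain b' where b': "b' \<in> carrier R" "b = p +> b'" using b quot_carrier_E by metis
    have "a \<otimes>\<^bsub>R Quot p\<^esub> b = p +> (a' \<otimes> b')"
      using a' b' ring_hom_ring.homh[OF hp] ring_hom_mult by metis
    then have "a' \<otimes> b' \<in> U" using ab memD a' b' by simp
    then have "q +> (a' \<otimes> b') \<in> C" unfolding U_def by simp
    moreover have "q +> (a' \<otimes> b') = (q +> a') \<otimes>\<^bsub>R Quot q\<^esub> (q +> b')"
      using a' b' ring_hom_ring.homh[OF hq] ring_hom_mult by metis
    ultimately have "q +> a' \<in> C \<or> q +> b' \<in> C"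
      using primeideal.I_prime[OF C] a' b' ring_hom_ring.homh[OF hq] ring_hom_closed by metis
    then have "a' \<in> U \<or> b' \<in> U" unfolding U_def using a' b' by auto
    then show "a \<in> (+>) p ` U \<or> b \<in> (+>) p ` U" using a' b' by auto
  qed
qed

lemma dim_mono:
  fixes R (structure)
  assumes cr: "cring R" and ip: "ideal p R" and iq: "ideal q R" and pq: "p \<subseteq> q"
  shows "krull_dim (R Quot q) \<le> krull_dim (R Quot p)"
  unfolding krull_dim_def
proof (rule Sup_subset_mono, safe)
  fix k and c :: "nat \<Rightarrow> 'a set set"
  assume P: "\<forall>i\<le>k. primeideal (c i) (R Quot q)" and S: "\<forall>i<k. c i \<subset> c (Suc i)"
  interpret cring R by (rule cr)
  define U where "U i = {r \<in> carrier R. q +> r \<in> c i}" for i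
  define c' where "c' i = (+>) p ` U i" for i
  have P': "primeideal (c' i) (R Quot p)" if "i \<le> k" for i
    using prime_transfer(1)[OF cr ip iq pq P[rule_format, OF that]] unfolding c'_def U_def .
  have UU: "\<Union> (c' i) = U i" if "i \<le> k" for i
    using prime_transfer(2)[OF cr ip iq pq P[rule_format, OF that]] unfolding c'_def U_def .
  have S': "c' i \<subset> c' (Suc i)" if "i < k" for i
  proof -
    have sub: "c i \<subset> c (Suc i)" using S that by blast
    have "U i \<subseteq> U (Suc i)" using sub unfolding U_def by blast
    moreover have "U i \<noteq> U (Suc i)"
    proof -
      obtain x where x: "x \<in> c (Suc i)" "x \<notin> c i" using sub by blast
      have "ideal (c (Suc i)) (R Quot q)"
        using P that primeideal.axioms(1) by (metis Suc_leI)
      then have "x \<in> carrier (R Quot q)" using x(1) additive_subgroup.a_subset ideal.axioms(1) by blast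
      then obtain r where "r \<in> carrier R" "x = q +> r" using quot_carrier_E by metis
      then show ?thesis using x unfolding U_def by blast
    qed
    ultimately have "U i \<subset> U (Suc i)" by blast
    then have "c' i \<subseteq> c' (Suc i)" "\<Union> (c' i) \<noteq> \<Union> (c' (Suc i))"
      using UU[of i] UU[of "Suc i"] that unfolding c'_def by auto
    then show ?thesis by blast
  qed
  show "\<exists>ka. enat k = enat ka \<and> (\<exists>c. (\<forall>i\<le>ka. primeideal (c i) (R Quot p)) \<and> (\<forall>i<ka. c i \<subset> c (Suc i)))"
    using P' S' by blast
qed

lemma (in ring) ideal_by_closure:
  assumes "I \<subseteq> carrier R" "\<zero> \<in> I" "\<And>a b. a \<in> I \<Longrightarrow> b \<in> I \<Longrightarrow> a \<oplus> b \<in> I"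
    "\<And>a. a \<in> I \<Longrightarrow> \<ominus> a \<in> I" "\<And>a x. a \<in> I \<Longrightarrow> x \<in> carrier R \<Longrightarrow> x \<otimes> a \<in> I"
    "\<And>a x. a \<in> I \<Longrightarrow> x \<in> carrier R \<Longrightarrow> a \<otimes> x \<in> I"
  shows "ideal I R"
proof (rule idealI[OF ring_axioms])
  show "subgroup I (add_monoid R)"
    apply (rule add.subgroupI)
    using assms by (auto simp: a_inv_def)
qed (use assms in auto)

context module
begin

lemma ann_ideal:
  assumes x: "x \<in> carrier M"
  shows "ideal {r \<in> carrier R. r \<odot>\<^bsub>M\<^esub> x = \<zero>\<^bsub>M\<^esub>} R"
proof (rule ideal_by_closure)
  fix a b assume "a \<in> {r \<in> carrier R. r \<odot>\<^bsub>M\<^esub> x = \<zero>\<^bsub>M\<^esub>}" "b \<in> {r \<in> carrier R. r \<odot>\<^bsub>M\<^esub> x = \<zero>\<^bsub>M\<^esub>}"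
  then show "a \<oplus> b \<in> {r \<in> carrier R. r \<odot>\<^bsub>M\<^esub> x = \<zero>\<^bsub>M\<^esub>}"
    using x by (simp add: smult_l_distr)
next
  fix a assume "a \<in> {r \<in> carrier R. r \<odot>\<^bsub>M\<^esub> x = \<zero>\<^bsub>M\<^esub>}"
  then show "\<ominus> a \<in> {r \<in> carrier R. r \<odot>\<^bsub>M\<^esub> x = \<zero>\<^bsub>M\<^esub>}"
    using x by (simp add: smult_l_minus)
next
  fix a y assume "a \<in> {r \<in> carrier R. r \<odot>\<^bsub>M\<^esub> x = \<zero>\<^bsub>M\<^esub>}" "y \<in> carrier R"
  then show "y \<otimes> a \<in> {r \<in> carrier R. r \<odot>\<^bsub>M\<^esub> x = \<zero>\<^bsub>M\<^esub>}"
    "a \<otimes> y \<in> {r \<in> carrier R. r \<odot>\<^bsub>M\<^esub> x = \<zero>\<^bsub>M\<^esub>}"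
    using x by (simp_all add: smult_assoc1 m_comm[of a y])
qed (use x in auto)


definition locann :: "'a set \<Rightarrow> 'c \<Rightarrow> 'a set" where
  "locann q y = {r \<in> carrier R. \<exists>s \<in> carrier R - q. (s \<otimes> r) \<odot>\<^bsub>M\<^esub> y = \<zero>\<^bsub>M\<^esub>}"

definition good :: "'a set \<Rightarrow> 'c \<Rightarrow> bool" where
  "good q y \<longleftrightarrow> y \<in> carrier M \<and> (\<forall>s \<in> carrier R - q. s \<odot>\<^bsub>M\<^esub> y \<noteq> \<zero>\<^bsub>M\<^esub>)"

lemma locann_ideal:
  assumes q: "primeideal q R" and y: "y \<in> carrier M"
  shows "ideal (locann q y) R"
proof (rule ideal_by_closure)
  have one: "\<one> \<in> carrier R - q" using q primeideal.I_notcarr ideal.one_imp_carrier primeideal.axioms(1)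
    by (metis DiffI one_closed)
  show "\<zero> \<in> locann q y" unfolding locann_def using one y by auto
next
  fix a b assume a: "a \<in> locann q y" and b: "b \<in> locann q y"
  then obtain s1 s2 where s1: "s1 \<in> carrier R - q" "(s1 \<otimes> a) \<odot>\<^bsub>M\<^esub> y = \<zero>\<^bsub>M\<^esub>"
    and s2: "s2 \<in> carrier R - q" "(s2 \<otimes> b) \<odot>\<^bsub>M\<^esub> y = \<zero>\<^bsub>M\<^esub>"
    and ac: "a \<in> carrier R" and bc: "b \<in> carrier R" unfolding locann_def by auto
  have ss: "s1 \<otimes> s2 \<in> carrier R - q" using s1 s2 primeideal.I_prime[OF q] by auto
  have "(s1 \<otimes> s2) \<otimes> (a \<oplus> b) = s2 \<otimes> (s1 \<otimes> a) \<oplus> s1 \<otimes> (s2 \<otimes> b)"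
  proof -
    have "s1 \<in> carrier R" "s2 \<in> carrier R" using s1 s2 by auto
    then show ?thesis using ac bc by algebra
  qed
  then have "((s1 \<otimes> s2) \<otimes> (a \<oplus> b)) \<odot>\<^bsub>M\<^esub> y = s2 \<odot>\<^bsub>M\<^esub> ((s1 \<otimes> a) \<odot>\<^bsub>M\<^esub> y) \<oplus>\<^bsub>M\<^esub> s1 \<odot>\<^bsub>M\<^esub> ((s2 \<otimes> b) \<odot>\<^bsub>M\<^esub> y)"
    using s1 s2 ac bc y by (simp add: smult_l_distr smult_assoc1)
  also have "\<dots> = \<zero>\<^bsub>M\<^esub>" using s1 s2 by simp
  finally show "a \<oplus> b \<in> locann q y" unfolding locann_def using ss ac bc by auto
next
  fix a assume "a \<in> locann q y"
  then obtain s where s: "s \<in> carrier R - q" "(s \<otimes> a) \<odot>\<^bsub>M\<^esub> y = \<zero>\<^bsub>M\<^esub>" and ac: "a \<in> carrier R"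
    unfolding locann_def by auto
  have "(s \<otimes> \<ominus> a) \<odot>\<^bsub>M\<^esub> y = (\<ominus> (s \<otimes> a)) \<odot>\<^bsub>M\<^esub> y" using s ac by (simp add: r_minus)
  also have "\<dots> = \<zero>\<^bsub>M\<^esub>" using s ac y by (simp add: smult_l_minus)
  finally show "\<ominus> a \<in> locann q y" unfolding locann_def using s ac by auto
next
  fix a x assume "a \<in> locann q y" and x: "x \<in> carrier R"
  then obtain s where s: "s \<in> carrier R - q" "(s \<otimes> a) \<odot>\<^bsub>M\<^esub> y = \<zero>\<^bsub>M\<^esub>" and ac: "a \<in> carrier R"
    unfolding locann_def by auto
  have e1: "s \<otimes> (x \<otimes> a) = x \<otimes> (s \<otimes> a)" "s \<otimes> (a \<otimes> x) = x \<otimes> (s \<otimes> a)"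
    using s(1) ac x by (simp_all add: m_lcomm m_comm)
  have "(x \<otimes> (s \<otimes> a)) \<odot>\<^bsub>M\<^esub> y = \<zero>\<^bsub>M\<^esub>" using s ac x y by (simp add: smult_assoc1)
  then show "x \<otimes> a \<in> locann q y" "a \<otimes> x \<in> locann q y"
  proof -
    have "s \<otimes> (x \<otimes> a) \<odot>\<^bsub>M\<^esub> y = \<zero>\<^bsub>M\<^esub>" "s \<otimes> (a \<otimes> x) \<odot>\<^bsub>M\<^esub> y = \<zero>\<^bsub>M\<^esub>"
      using e1 \<open>(x \<otimes> (s \<otimes> a)) \<odot>\<^bsub>M\<^esub> y = \<zero>\<^bsub>M\<^esub>\<close> by simp_all
    then show "x \<otimes> a \<in> locann q y" "a \<otimes> x \<in> locann q y"
      unfolding locann_def using s ac x by blast+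
  qed
qed (auto simp: locann_def)

lemma locann_sub:
  assumes q: "primeideal q R" and g: "good q y"
  shows "locann q y \<subseteq> q"
proof
  fix r assume "r \<in> locann q y"
  then obtain s where s: "s \<in> carrier R - q" "(s \<otimes> r) \<odot>\<^bsub>M\<^esub> y = \<zero>\<^bsub>M\<^esub>" and rc: "r \<in> carrier R"
    unfolding locann_def by auto
  show "r \<in> q"
  proof (rule ccontr)
    assume "r \<notin> q"
    then have "s \<otimes> r \<in> carrier R - q" using s rc primeideal.I_prime[OF q] by auto
    then show False using g s unfolding good_def by auto
  qed
qed

lemma good_smult:
  assumes g: "good q y" and a: "a \<in> carrier R" "a \<notin> locann q y"
  shows "good q (a \<odot>\<^bsub>M\<^esub> y)"
  unfolding good_def
proof safe
  show "a \<odot>\<^bsub>M\<^esub> y \<in> carrier M" using g a unfolding good_def by simp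
  fix t assume t: "t \<in> carrier R" "t \<notin> q" "t \<odot>\<^bsub>M\<^esub> (a \<odot>\<^bsub>M\<^esub> y) = \<zero>\<^bsub>M\<^esub>"
  then have "(t \<otimes> a) \<odot>\<^bsub>M\<^esub> y = \<zero>\<^bsub>M\<^esub>" using g a unfolding good_def by (simp add: smult_assoc1)
  then show False using a t unfolding locann_def by auto
qed

lemma locann_mono:
  assumes y: "y \<in> carrier M" and a: "a \<in> carrier R"
  shows "locann q y \<subseteq> locann q (a \<odot>\<^bsub>M\<^esub> y)"
proof
  fix r assume "r \<in> locann q y"
  then obtain s where s: "s \<in> carrier R - q" "(s \<otimes> r) \<odot>\<^bsub>M\<^esub> y = \<zero>\<^bsub>M\<^esub>" and rc: "r \<in> carrier R"
    unfolding locann_def by auto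
  have "(s \<otimes> r) \<odot>\<^bsub>M\<^esub> (a \<odot>\<^bsub>M\<^esub> y) = ((s \<otimes> r) \<otimes> a) \<odot>\<^bsub>M\<^esub> y"
    using s rc a y by (simp add: smult_assoc1)
  also have "\<dots> = (a \<otimes> (s \<otimes> r)) \<odot>\<^bsub>M\<^esub> y" using s rc a by (simp add: m_comm)
  also have "\<dots> = \<zero>\<^bsub>M\<^esub>" using s rc a y by (simp add: smult_assoc1)
  finally show "r \<in> locann q (a \<odot>\<^bsub>M\<^esub> y)" unfolding locann_def using s rc by auto
qed

lemma finite_kill:
  assumes "finite G" "G \<subseteq> locann q y" and q: "primeideal q R" and y: "y \<in> carrier M"
  shows "\<exists>s \<in> carrier R - q. \<forall>g \<in> G. (s \<otimes> g) \<odot>\<^bsub>M\<^esub> y = \<zero>\<^bsub>M\<^esub>"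
  using assms(1,2)
proof (induct G)
  case empty
  have "\<one> \<in> carrier R - q" using q primeideal.I_notcarr ideal.one_imp_carrier primeideal.axioms(1)
    by (metis DiffI one_closed)
  then show ?case by blast
next
  case (insert g G)
  then obtain s where s: "s \<in> carrier R - q" "\<forall>h \<in> G. (s \<otimes> h) \<odot>\<^bsub>M\<^esub> y = \<zero>\<^bsub>M\<^esub>" by auto
  from insert obtain s' where s': "s' \<in> carrier R - q" "(s' \<otimes> g) \<odot>\<^bsub>M\<^esub> y = \<zero>\<^bsub>M\<^esub>"
    and gc: "g \<in> carrier R" unfolding locann_def by auto
  have ss: "s \<otimes> s' \<in> carrier R - q" using s s' primeideal.I_prime[OF q] by auto
  show ?case
  proof (intro bexI[OF _ ss] ballI)
    fix h assume h: "h \<in> insert g G"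
    show "(s \<otimes> s' \<otimes> h) \<odot>\<^bsub>M\<^esub> y = \<zero>\<^bsub>M\<^esub>"
    proof (cases "h = g")
      case True
      then have "(s \<otimes> s' \<otimes> h) = s \<otimes> (s' \<otimes> g)" using s s' gc by (simp add: m_assoc)
      then show ?thesis using s s' gc y by (simp add: smult_assoc1)
    next
      case False
      then have hG: "h \<in> G" "h \<in> carrier R" using h insert unfolding locann_def by auto
      then have "(s \<otimes> s' \<otimes> h) = s' \<otimes> (s \<otimes> h)" using s s' by (simp add: m_ac)
      moreover have "(s' \<otimes> (s \<otimes> h)) \<odot>\<^bsub>M\<^esub> y = s' \<odot>\<^bsub>M\<^esub> ((s \<otimes> h) \<odot>\<^bsub>M\<^esub> y)"
        using s s' hG y by (simp add: smult_assoc1 del: smult_assoc1[symmetric])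
      ultimately show ?thesis using s s' hG y by simp
    qed
  qed
qed

lemma exists_ass_below:
  assumes noe: "noetherian_ring R" and q: "primeideal q R" and g0: "good q y0"
  shows "\<exists>p. primeideal p R \<and> p \<subseteq> q \<and> (\<exists>z\<in>carrier M. p = {r \<in> carrier R. r \<odot>\<^bsub>M\<^esub> z = \<zero>\<^bsub>M\<^esub>})"
proof -
  define F where "F = {locann q y | y. good q y}"
  have Fid: "\<And>I. I \<in> F \<Longrightarrow> ideal I R" unfolding F_def good_def using locann_ideal[OF q] by auto
  have "\<exists>Mx\<in>F. \<forall>W\<in>F. Mx \<subseteq> W \<longrightarrow> W = Mx"
  proof (rule Zorn_Lemma2, rule ballI)
    fix C assume C: "C \<in> chains F"
    show "\<exists>U\<in>F. \<forall>W\<in>C. W \<subseteq> U"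
    proof (cases "C = {}")
      case True
      then show ?thesis using g0 unfolding F_def by blast
    next
      case False
      have "subset.chain {I. ideal I R} C"
        using C Fid unfolding chains_def chain_subset_def pred_on.chain_def by blast
      then have "\<Union>C \<in> C" using noetherian_ring.ideal_chain_is_trivial[OF noe False] by blast
      then show ?thesis using C unfolding chains_def by blast
    qed
  qed
  then obtain y where g: "good q y" and maxi: "\<forall>W\<in>F. locann q y \<subseteq> W \<longrightarrow> W = locann q y"
    unfolding F_def by blast
  have yc: "y \<in> carrier M" using g good_def by blast
  define p where "p = locann q y"
  have ip: "ideal p R" unfolding p_def using locann_ideal[OF q yc] .
  have pq: "p \<subseteq> q" unfolding p_def using locann_sub[OF q g] .
  have one: "\<one> \<notin> q" using q primeideal.I_notcarr ideal.one_imp_carrier primeideal.axioms(1)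
    by metis
  have pp: "primeideal p R"
  proof (rule primeidealI[OF ip is_cring])
    show "carrier R \<noteq> p" using pq one by auto
  next
    fix a b assume a: "a \<in> carrier R" and b: "b \<in> carrier R" and ab: "a \<otimes> b \<in> p"
    show "a \<in> p \<or> b \<in> p"
    proof (cases "a \<in> p")
      case False
      have ga: "good q (a \<odot>\<^bsub>M\<^esub> y)" using good_smult[OF g a False[unfolded p_def]] .
      have "locann q (a \<odot>\<^bsub>M\<^esub> y) = p"
        using maxi locann_mono[OF yc a] ga unfolding F_def p_def by blast
      moreover have "b \<in> locann q (a \<odot>\<^bsub>M\<^esub> y)"
      proof -
        obtain s where s: "s \<in> carrier R" "s \<notin> q" "(s \<otimes> (a \<otimes> b)) \<odot>\<^bsub>M\<^esub> y = \<zero>\<^bsub>M\<^esub>"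
          using ab unfolding p_def locann_def by auto
        have "(s \<otimes> b) \<odot>\<^bsub>M\<^esub> (a \<odot>\<^bsub>M\<^esub> y) = ((s \<otimes> b) \<otimes> a) \<odot>\<^bsub>M\<^esub> y"
          using s a b yc by (simp add: smult_assoc1)
        also have "(s \<otimes> b) \<otimes> a = s \<otimes> (a \<otimes> b)" using s a b by (simp add: m_ac)
        finally show ?thesis using s b unfolding locann_def by auto
      qed
      ultimately show ?thesis by blast
    qed simp
  qed
  obtain G where G: "G \<subseteq> carrier R" "finite G" "p = Idl G"
    using noetherian_ring.finetely_gen[OF noe ip] by blast
  have "G \<subseteq> p" using G genideal_self by blast
  then obtain s where s: "s \<in> carrier R - q" "\<forall>g \<in> G. (s \<otimes> g) \<odot>\<^bsub>M\<^esub> y = \<zero>\<^bsub>M\<^esub>"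
    using finite_kill[OF G(2) _ q yc] unfolding p_def by blast
  define z where "z = s \<odot>\<^bsub>M\<^esub> y"
  have zc: "z \<in> carrier M" unfolding z_def using s yc by simp
  have iZ: "ideal {r \<in> carrier R. r \<odot>\<^bsub>M\<^esub> z = \<zero>\<^bsub>M\<^esub>} R" using ann_ideal[OF zc] .
  have "G \<subseteq> {r \<in> carrier R. r \<odot>\<^bsub>M\<^esub> z = \<zero>\<^bsub>M\<^esub>}"
  proof
    fix g assume g: "g \<in> G"
    then have gc: "g \<in> carrier R" using G by auto
    have "g \<odot>\<^bsub>M\<^esub> z = (g \<otimes> s) \<odot>\<^bsub>M\<^esub> y" unfolding z_def using gc s yc by (simp add: smult_assoc1)
    also have "\<dots> = (s \<otimes> g) \<odot>\<^bsub>M\<^esub> y" using gc s by (simp add: m_comm)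
    finally show "g \<in> {r \<in> carrier R. r \<odot>\<^bsub>M\<^esub> z = \<zero>\<^bsub>M\<^esub>}" using s g gc by auto
  qed
  then have sub1: "p \<subseteq> {r \<in> carrier R. r \<odot>\<^bsub>M\<^esub> z = \<zero>\<^bsub>M\<^esub>}"
    using G(3) genideal_minimal[OF iZ] by auto
  have sub2: "{r \<in> carrier R. r \<odot>\<^bsub>M\<^esub> z = \<zero>\<^bsub>M\<^esub>} \<subseteq> p"
  proof safe
    fix r assume r: "r \<in> carrier R" "r \<odot>\<^bsub>M\<^esub> z = \<zero>\<^bsub>M\<^esub>"
    have "(s \<otimes> r) \<odot>\<^bsub>M\<^esub> y = (r \<otimes> s) \<odot>\<^bsub>M\<^esub> y" using r s by (simp add: m_comm)
    also have "\<dots> = r \<odot>\<^bsub>M\<^esub> z" unfolding z_def using r s yc by (simp add: smult_assoc1)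
    finally show "r \<in> p" unfolding p_def locann_def using r s by auto
  qed
  show ?thesis using pp pq sub1 sub2 zc by blast
qed

end

theorem lemma2p5:
  fixes R :: "('a, 'c) ring_scheme" and L :: "('a, 'b, 'd) module_scheme"
    and L' :: "'b set" and n :: nat
  assumes "noetherian_ring R" and "cring R"
    and "module R L"
    and "enat n \<le> dim_mod R L"
    and "submodule L' R L"
    and "enat n \<le> dim_quot_mod R L L'"
  shows "carrier R \<inter> (\<Inter>p \<in> ge_dim R (Ass R L) n. p)
           \<subseteq> carrier R \<inter> (\<Inter>p \<in> ge_dim R (Ass_quot R L L') n. p)"
proof (rule subsetI, rule IntI)
  fix r assume r0: "r \<in> carrier R \<inter> (\<Inter>p \<in> ge_dim R (Ass R L) n. p)"
  from r0 show "r \<in> carrier R" by blast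
  from r0 have rin: "\<forall>p \<in> ge_dim R (Ass R L) n. r \<in> p" by blast
  show "r \<in> (\<Inter>p \<in> ge_dim R (Ass_quot R L L') n. p)"
  proof (rule INT_I)
  fix q assume qin: "q \<in> ge_dim R (Ass_quot R L L') n"
  interpret module R L by fact
  from qin obtain x where qp: "primeideal q R" and xc: "x \<in> carrier L"
    and qx: "q = ann_quot R L L' x" and qd: "enat n \<le> dim_quot R q"
    unfolding ge_dim_def Ass_quot_def by blast
  have zL: "\<zero>\<^bsub>L\<^esub> \<in> L'"
    using subgroup.one_closed[OF submodule.axioms(1)[OF assms(5)]] by simp
  have "good q x" unfolding good_def
  proof safe
    show "x \<in> carrier L" by fact
    fix s assume "s \<in> carrier R" "s \<notin> q" "s \<odot>\<^bsub>L\<^esub> x = \<zero>\<^bsub>L\<^esub>"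
    then show False using zL qx unfolding ann_quot_def by auto
  qed
  then obtain p z where pp: "primeideal p R" and pq: "p \<subseteq> q" and zc: "z \<in> carrier L"
    and pz: "p = {r \<in> carrier R. r \<odot>\<^bsub>L\<^esub> z = \<zero>\<^bsub>L\<^esub>}"
    using exists_ass_below[OF assms(1) qp] by blast
  have "p \<in> Ass R L" unfolding Ass_def Ass_quot_def ann_quot_def using pp zc pz by auto
  moreover have "dim_quot R q \<le> dim_quot R p"
    unfolding dim_quot_def
    by (rule dim_mono[OF assms(2) primeideal.axioms(1)[OF pp] primeideal.axioms(1)[OF qp] pq])
  ultimately have "p \<in> ge_dim R (Ass R L) n" using qd unfolding ge_dim_def by auto
  then show "r \<in> q" using rin pq by blast
  qed
qed

end
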